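(* Let $\lambda$ be a (straight or skew) shape with $n$ boxes and let $m\in\mathbb N=\{1,2,3,\dots\}$. Then $$\#T[\lambda,m,+]=\#T[\lambda,m,-]=2^{n-1}f^{\lambda},$$ where $f^\lambda$ is the number of standard Young tableaux of shape $\lambda$ (fillings of $\lambda$ by $1,\dots,n$ increasing along rows and down columns).
   Context: Boxes of a diagram are indexed by (row $i$, column $j$), rows numbered downward and columns rightward; the content of the box $(i,j)$ is $j-i$. A D-Young tableau is a filling of a skew diagram by the $2n$ numbers $\pm1,\dots,\pm n$, each number in exactly one box and each box containing one number, except that a box of content $0$ may contain a pair $\pm i$; writing $c_k$ for the content of the box containing $k$, one requires $c_{-k}=-c_k$ for all $k$. It is standard if entries increase from left to right along rows and from top to bottom down columns (a box containing the pair $\pm i$, $i>0$, counts as $-i$ when compared with entries to its left or above and as $i$ when compared with entries to its right or below). A D-Young tableau with no box of content $0$ is regarded as determined by its boxes of positive content together with their entries and contents (i.e. its positive-content part up to translation by multiples of $(1,1)$); the negative part is then forced. For a shape $\lambda$ with $n$ boxes and $m\in\mathbb N$, $T[\lambda,m,+]$ (resp. $T[\lambda,m,-]$) is the set of standard D-Young tableaux whose smallest nonnegative content equals $m$, whose boxes of positive content form the shape $\lambda$, and in which the number of negative entries among the boxes of positive content is even (resp. odd). *)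

theory Defs
  imports Main
begin

type_synonym box = "int \<times> int"

text \<open>Box (i,j): row i (downward), column j (rightward); content j - i.\<close>
definition content :: "box \<Rightarrow> int" where
  "content b = snd b - fst b"

text \<open>Skew diagrams (straight or skew shapes lambda/mu, up to position) are exactly the
finite subsets of the integer grid that are convex for the product order.\<close>
definition skew_diagram :: "box set \<Rightarrow> bool" where
  "skew_diagram S \<longleftrightarrow> finite S \<and>
     (\<forall>i j i' j' a b. (i,j) \<in> S \<longrightarrow> (i',j') \<in> S \<longrightarrow> i \<le> a \<longrightarrow> a \<le> i'
        \<longrightarrow> j \<le> b \<longrightarrow> b \<le> j' \<longrightarrow> (a,b) \<in> S)"

definition shift :: "int \<times> int \<Rightarrow> box set \<Rightarrow> box set" where
  "shift t S = (\<lambda>(i,j). (i + fst t, j + snd t)) ` S"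

definition entries :: "nat \<Rightarrow> int set" where
  "entries n = {k. k \<noteq> 0 \<and> \<bar>k\<bar> \<le> int n}"

text \<open>A D-Young tableau with entries \<open>\<plusminus>1..\<plusminus>n\<close> is encoded by the map sending each entry
to the box containing it (normalised to (0,0) outside the entries).\<close>
definition D_young_tableau :: "nat \<Rightarrow> (int \<Rightarrow> box) \<Rightarrow> bool" where
  "D_young_tableau n pos \<longleftrightarrow>
     skew_diagram (pos ` entries n) \<and>
     (\<forall>k\<in>entries n. content (pos (-k)) = - content (pos k)) \<and>
     (\<forall>a\<in>entries n. \<forall>b\<in>entries n. a \<noteq> b \<longrightarrow> pos a = pos b \<longrightarrow>
          b = -a \<and> content (pos a) = 0) \<and>
     (\<forall>k. k \<notin> entries n \<longrightarrow> pos k = (0,0))"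

text \<open>For a box holding a pair
\<open>\<plusminus>i\<close>, requiring all its entries to be smaller than everything to its right/below and larger
than everything to its left/above is exactly the convention of counting it as i resp. -i.\<close>
definition D_standard :: "nat \<Rightarrow> (int \<Rightarrow> box) \<Rightarrow> bool" where
  "D_standard n pos \<longleftrightarrow>
     (\<forall>a\<in>entries n. \<forall>b\<in>entries n.
        (fst (pos a) = fst (pos b) \<and> snd (pos a) < snd (pos b) \<longrightarrow> a < b) \<and>
        (snd (pos a) = snd (pos b) \<and> fst (pos a) < fst (pos b) \<longrightarrow> a < b))"

definition pos_boxes :: "nat \<Rightarrow> (int \<Rightarrow> box) \<Rightarrow> box set" where
  "pos_boxes n pos = {pos k | k. k \<in> entries n \<and> content (pos k) > 0}"

definition min_nonneg_content :: "nat \<Rightarrow> (int \<Rightarrow> box) \<Rightarrow> int" where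
  "min_nonneg_content n pos = Min {content (pos k) | k. k \<in> entries n \<and> content (pos k) \<ge> 0}"

definition num_neg_in_pos :: "nat \<Rightarrow> (int \<Rightarrow> box) \<Rightarrow> nat" where
  "num_neg_in_pos n pos = card {k \<in> entries n. k < 0 \<and> content (pos k) > 0}"

definition has_zero_box :: "nat \<Rightarrow> (int \<Rightarrow> box) \<Rightarrow> bool" where
  "has_zero_box n pos \<longleftrightarrow> (\<exists>k\<in>entries n. content (pos k) = 0)"

definition same_D_tableau :: "nat \<Rightarrow> (int \<Rightarrow> box) \<Rightarrow> (int \<Rightarrow> box) \<Rightarrow> bool" where
  "same_D_tableau n p q \<longleftrightarrow> p = q \<or>
     (\<not> has_zero_box n p \<and> \<not> has_zero_box n q \<and>
      (\<exists>t::int. \<forall>k\<in>entries n. (content (p k) > 0 \<longleftrightarrow> content (q k) > 0) \<and>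
          (content (p k) > 0 \<longrightarrow> q k = (fst (p k) + t, snd (p k) + t))))"

definition T_raw :: "box set \<Rightarrow> nat \<Rightarrow> bool \<Rightarrow> (int \<Rightarrow> box) set" where
  "T_raw lam m ev = {pos. D_young_tableau (card lam) pos \<and> D_standard (card lam) pos \<and>
      min_nonneg_content (card lam) pos = int m \<and>
      (\<exists>t. pos_boxes (card lam) pos = shift t lam) \<and>
      (even (num_neg_in_pos (card lam) pos) \<longleftrightarrow> ev)}"

text \<open>\<open>T_D lam m True\<close> is T[lam,m,+], \<open>T_D lam m False\<close> is T[lam,m,-].\<close>
definition T_D :: "box set \<Rightarrow> nat \<Rightarrow> bool \<Rightarrow> (int \<Rightarrow> box) set set" where
  "T_D lam m ev = T_raw lam m ev //
     {(p,q). p \<in> T_raw lam m ev \<and> q \<in> T_raw lam m ev \<and> same_D_tableau (card lam) p q}"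

definition SYT :: "box set \<Rightarrow> (box \<Rightarrow> nat) set" where
  "SYT lam = {g. (\<forall>x. x \<notin> lam \<longrightarrow> g x = 0) \<and> bij_betw g lam {1..card lam} \<and>
     (\<forall>x\<in>lam. \<forall>y\<in>lam.
        (fst x = fst y \<and> snd x < snd y \<longrightarrow> g x < g y) \<and>
        (snd x = snd y \<and> fst x < fst y \<longrightarrow> g x < g y))}"

definition f_shape :: "box set \<Rightarrow> nat" where
  "f_shape lam = card (SYT lam)"

end

theory Submission
  imports Defs
begin


definition fill :: "box set \<Rightarrow> 'a::linorder set \<Rightarrow> 'a \<Rightarrow> (box \<Rightarrow> 'a) set" where
  "fill lam V d = {g. (\<forall>x. x \<notin> lam \<longrightarrow> g x = d) \<and> bij_betw g lam V \<and>
     (\<forall>x\<in>lam. \<forall>y\<in>lam.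
        (fst x = fst y \<and> snd x < snd y \<longrightarrow> g x < g y) \<and>
        (snd x = snd y \<and> fst x < fst y \<longrightarrow> g x < g y))}"

lemma SYT_fill: "SYT lam = fill lam {1..card lam} 0"
  unfolding SYT_def fill_def by simp

lemma fill_transfer:
  fixes \<psi> :: "'a::linorder \<Rightarrow> 'b::linorder"
  assumes sm: "strict_mono_on A \<psi>" and bj: "bij_betw \<psi> A B"
  shows "card (fill lam A d) = card (fill lam B e)"
proof -
  define \<phi> where "\<phi> = the_inv_into A \<psi>"
  have inj: "inj_on \<psi> A" and img: "\<psi> ` A = B" using bj by (auto simp: bij_betw_def)
  have pp: "\<phi> (\<psi> a) = a" if "a \<in> A" for a using the_inv_into_f_f[OF inj that] \<phi>_def by simp
  have qq: "\<psi> (\<phi> b) = b" if "b \<in> B" for b using f_the_inv_into_f[OF inj] that img \<phi>_def by simp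
  have phiB: "\<phi> b \<in> A" if "b \<in> B" for b using that img pp by auto
  have smi: "\<phi> b1 < \<phi> b2" if "b1 \<in> B" "b2 \<in> B" "b1 < b2" for b1 b2
  proof (rule ccontr)
    assume "\<not> \<phi> b1 < \<phi> b2"
    then have "\<phi> b2 < \<phi> b1 \<or> \<phi> b2 = \<phi> b1" by auto
    then show False
    proof
      assume "\<phi> b2 < \<phi> b1"
      then have "\<psi> (\<phi> b2) < \<psi> (\<phi> b1)" using sm phiB that unfolding strict_mono_on_def by blast
      then show False using qq that by auto
    next
      assume "\<phi> b2 = \<phi> b1" then have "\<psi> (\<phi> b2) = \<psi> (\<phi> b1)" by simp
      then show False using qq that by auto
    qed
  qed
  have smA: "\<psi> a1 < \<psi> a2" if "a1 \<in> A" "a2 \<in> A" "a1 < a2" for a1 a2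
    using sm that unfolding strict_mono_on_def by blast
  define F where "F = (\<lambda>g x. if x \<in> lam then \<psi> (g x) else e)"
  define G where "G = (\<lambda>h x. if x \<in> lam then \<phi> (h x) else d)"
  have "bij_betw F (fill lam A d) (fill lam B e)"
  proof (rule bij_betw_byWitness[where f'=G])
    show "\<forall>g\<in>fill lam A d. G (F g) = g"
    proof
      fix g assume g: "g \<in> fill lam A d"
      then have "g x \<in> A" if "x \<in> lam" for x using that by (auto simp: fill_def bij_betw_def)
      then show "G (F g) = g" using g pp by (auto simp: fill_def F_def G_def fun_eq_iff)
    qed
    show "\<forall>h\<in>fill lam B e. F (G h) = h"
    proof
      fix h assume h: "h \<in> fill lam B e"
      then have "h x \<in> B" if "x \<in> lam" for x using that by (auto simp: fill_def bij_betw_def)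
      then show "F (G h) = h" using h qq by (auto simp: fill_def F_def G_def fun_eq_iff)
    qed
    show "F ` fill lam A d \<subseteq> fill lam B e"
    proof
      fix h assume "h \<in> F ` fill lam A d"
      then obtain g where g: "g \<in> fill lam A d" and h: "h = F g" by auto
      have gA: "g x \<in> A" if "x \<in> lam" for x using g that by (auto simp: fill_def bij_betw_def)
      have "bij_betw (\<psi> \<circ> g) lam B" using g bj bij_betw_trans by (auto simp: fill_def)
      then have "bij_betw h lam B" by (rule bij_betw_cong[THEN iffD1, rotated]) (auto simp: h F_def)
      moreover have "\<forall>x. x \<notin> lam \<longrightarrow> h x = e" by (auto simp: h F_def)
      moreover have "(\<forall>x\<in>lam. \<forall>y\<in>lam.
        (fst x = fst y \<and> snd x < snd y \<longrightarrow> h x < h y) \<and>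
        (snd x = snd y \<and> fst x < fst y \<longrightarrow> h x < h y))"
        using g gA smA by (auto simp: fill_def h F_def)
      ultimately show "h \<in> fill lam B e" by (simp add: fill_def)
    qed
    show "G ` fill lam B e \<subseteq> fill lam A d"
    proof
      fix g assume "g \<in> G ` fill lam B e"
      then obtain h where h: "h \<in> fill lam B e" and g: "g = G h" by auto
      have hB: "h x \<in> B" if "x \<in> lam" for x using h that by (auto simp: fill_def bij_betw_def)
      have bphi: "bij_betw \<phi> B A" using bj by (simp add: \<phi>_def bij_betw_the_inv_into)
      have "bij_betw (\<phi> \<circ> h) lam A" using h bphi bij_betw_trans by (auto simp: fill_def)
      then have "bij_betw g lam A" by (rule bij_betw_cong[THEN iffD1, rotated]) (auto simp: g G_def)
      moreover have "\<forall>x. x \<notin> lam \<longrightarrow> g x = d" by (auto simp: g G_def)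
      moreover have "(\<forall>x\<in>lam. \<forall>y\<in>lam.
        (fst x = fst y \<and> snd x < snd y \<longrightarrow> g x < g y) \<and>
        (snd x = snd y \<and> fst x < fst y \<longrightarrow> g x < g y))"
        using h hB smi by (auto simp: fill_def g G_def)
      ultimately show "g \<in> fill lam A d" by (simp add: fill_def)
    qed
  qed
  then show ?thesis by (rule bij_betw_same_card)
qed

lemma ordered_enum:
  fixes V :: "'a::linorder set"
  assumes "finite V"
  shows "\<exists>\<psi>. strict_mono_on {1..card V} \<psi> \<and> bij_betw \<psi> {1..card V} V"
proof -
  define xs where "xs = sorted_list_of_set V"
  have sw: "sorted_wrt (<) xs" and len: "length xs = card V" and st: "set xs = V"
    using assms by (auto simp: xs_def)
  have dis: "distinct xs" using xs_def by simp
  define \<psi> where "\<psi> = (\<lambda>i::nat. xs ! (i - 1))"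
  have "strict_mono_on {1..card V} \<psi>"
    unfolding strict_mono_on_def \<psi>_def
    using sorted_wrt_nth_less[OF sw] len by auto
  moreover have "bij_betw \<psi> {1..card V} V"
  proof -
    have "bij_betw (\<lambda>i. xs ! i) {..<length xs} (set xs)" using dis by (rule bij_betw_nth) auto
    moreover have "bij_betw (\<lambda>i. i - 1) {1..card V} {..<length xs}"
      by (rule bij_betw_byWitness[where f'="\<lambda>i. i + 1"]) (auto simp: len)
    ultimately have "bij_betw ((\<lambda>i. xs ! i) \<circ> (\<lambda>i. i - 1)) {1..card V} (set xs)"
      using bij_betw_trans by blast
    then show ?thesis by (simp add: \<psi>_def st o_def)
  qed
  ultimately show ?thesis by blast
qed

lemma fill_card_enum:
  fixes V :: "'a::linorder set"
  assumes "finite V" "card V = card lam"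
  shows "card (fill lam V d) = f_shape lam"
proof -
  obtain \<psi> where "strict_mono_on {1..card V} \<psi>" "bij_betw \<psi> {1..card V} V"
    using ordered_enum[OF assms(1)] by blast
  then have "card (fill lam {1..card V} 0) = card (fill lam V d)" by (rule fill_transfer)
  then show ?thesis using assms by (simp add: f_shape_def SYT_fill)
qed

lemma even_subsets:
  assumes "n \<ge> 1"
  shows "card {S. S \<subseteq> {1..n::nat} \<and> (even (card S) \<longleftrightarrow> ev)} = 2 ^ (n - 1)"
proof -
  define E where "E = {S. S \<subseteq> {1..n::nat} \<and> even (card S)}"
  define Od where "Od = {S. S \<subseteq> {1..n::nat} \<and> odd (card S)}"
  have fin: "finite E" "finite Od" unfolding E_def Od_def by auto
  have tog: "bij_betw (\<lambda>S. S \<union> {1} - (S \<inter> {1})) E Od"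
  proof (rule bij_betw_byWitness[where f'="\<lambda>S. S \<union> {1} - (S \<inter> {1})"])
    show "\<forall>a\<in>E. a \<union> {1} - a \<inter> {1} \<union> {1} - (a \<union> {1} - a \<inter> {1}) \<inter> {1} = a" by auto
    show "\<forall>a\<in>Od. a \<union> {1} - a \<inter> {1} \<union> {1} - (a \<union> {1} - a \<inter> {1}) \<inter> {1} = a" by auto
    have k: "even (card (S \<union> {1} - (S \<inter> {1}))) \<longleftrightarrow> odd (card S)" if "S \<subseteq> {1..n}" for S
    proof -
      have fS: "finite S" using that finite_subset by blast
      show ?thesis
      proof (cases "1 \<in> S")
        case True
        then have "S \<union> {1} - (S \<inter> {1}) = S - {1}" by auto
        moreover have "card S > 0" using True fS card_gt_0_iff by blast
        ultimately show ?thesis using True fS by (cases "card S") (auto simp: card_Diff_singleton)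
      next
        case False
        then have "S \<union> {1} - (S \<inter> {1}) = insert 1 S" by auto
        then show ?thesis using False fS by simp
      qed
    qed
    have sub: "S \<union> {1} - (S \<inter> {1}) \<subseteq> {1..n}" if "S \<subseteq> {1..n}" for S using that assms by auto
    show "(\<lambda>S. S \<union> {1} - S \<inter> {1}) ` E \<subseteq> Od" using k sub unfolding E_def Od_def by auto
    show "(\<lambda>S. S \<union> {1} - S \<inter> {1}) ` Od \<subseteq> E" using k sub unfolding E_def Od_def by auto
  qed
  then have cEO: "card E = card Od" by (rule bij_betw_same_card)
  have "E \<union> Od = Pow {1..n}" "E \<inter> Od = {}" unfolding E_def Od_def by auto
  then have "card E + card Od = card (Pow {1..n})" using fin card_Un_disjoint by metis
  also have "\<dots> = 2 ^ n" by (simp add: card_Pow)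
  also have "\<dots> = 2 * 2 ^ (n - 1)" using assms by (cases n) auto
  finally have "card E = 2 ^ (n - 1)" "card Od = 2 ^ (n - 1)" using cEO by auto
  then show ?thesis by (cases ev) (simp_all add: E_def Od_def)
qed



definition padd :: "int \<times> int \<Rightarrow> box \<Rightarrow> box" where
  "padd t x = (fst x + fst t, snd x + snd t)"

lemma shift_padd: "shift t S = padd t ` S"
  unfolding shift_def padd_def by (auto simp: case_prod_beta)

lemma padd_inj: "inj (padd t)"
  unfolding padd_def inj_def by auto

lemma content_padd: "content (padd t x) = content x + (snd t - fst t)"
  unfolding content_def padd_def by simp

lemma padd_padd: "padd a (padd b x) = padd (fst a + fst b, snd a + snd b) x"
  unfolding padd_def by simp

lemma sum_fst_padd: "finite lam \<Longrightarrow> (\<Sum>y\<in>padd t ` lam. fst y) = (\<Sum>x\<in>lam. fst x) + of_nat (card lam) * fst t"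
proof -
  have "(\<Sum>y\<in>padd t ` lam. fst y) = sum (fst \<circ> padd t) lam"
    by (rule sum.reindex) (rule inj_on_subset[OF padd_inj], simp)
  also have "\<dots> = (\<Sum>x\<in>lam. fst x + fst t)" by (simp add: padd_def o_def)
  also have "\<dots> = (\<Sum>x\<in>lam. fst x) + of_nat (card lam) * fst t" by (simp add: sum.distrib)
  finally show ?thesis .
qed

lemma sum_snd_padd: "finite lam \<Longrightarrow> (\<Sum>y\<in>padd t ` lam. snd y) = (\<Sum>x\<in>lam. snd x) + of_nat (card lam) * snd t"
proof -
  have "(\<Sum>y\<in>padd t ` lam. snd y) = sum (snd \<circ> padd t) lam"
    by (rule sum.reindex) (rule inj_on_subset[OF padd_inj], simp)
  also have "\<dots> = (\<Sum>x\<in>lam. snd x + snd t)" by (simp add: padd_def o_def)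
  also have "\<dots> = (\<Sum>x\<in>lam. snd x) + of_nat (card lam) * snd t" by (simp add: sum.distrib)
  finally show ?thesis .
qed

lemma shift_unique:
  assumes "finite lam" "lam \<noteq> {}" "padd a ` lam = padd b ` lam"
  shows "a = b"
proof -
  have c: "int (card lam) > 0" using assms by auto
  have efst: "sum fst (padd a ` lam) = sum fst (padd b ` lam)" using assms(3) by simp
  have "int (card lam) * fst a = int (card lam) * fst b"
    using efst sum_fst_padd[OF assms(1), of a] sum_fst_padd[OF assms(1), of b] by linarith
  then have 1: "fst a = fst b" using c by simp
  have esnd: "sum snd (padd a ` lam) = sum snd (padd b ` lam)" using assms(3) by simp
  have "int (card lam) * snd a = int (card lam) * snd b"
    using esnd sum_snd_padd[OF assms(1), of a] sum_snd_padd[OF assms(1), of b] by linarith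
  then have 2: "snd a = snd b" using c by simp
  show ?thesis using 1 2 by (simp add: prod_eq_iff)
qed

lemma finite_entries: "finite (entries n)"
  unfolding entries_def by (rule finite_subset[of _ "{- int n..int n}"]) auto

definition VS :: "nat \<Rightarrow> nat set \<Rightarrow> int set" where
  "VS n S = (\<lambda>j. - int j) ` S \<union> int ` ({1..n} - S)"

lemma VS_finite: "S \<subseteq> {1..n} \<Longrightarrow> finite (VS n S)"
  unfolding VS_def by (intro finite_UnI finite_imageI) (auto dest: finite_subset)
  
lemma VS_card: assumes "S \<subseteq> {1..n}" shows "card (VS n S) = n"
proof -
  have fS: "finite S" using assms finite_subset by blast
  have d: "(\<lambda>j. - int j) ` S \<inter> int ` ({1..n} - S) = {}" using assms by auto
  have "card (VS n S) = card ((\<lambda>j. - int j) ` S) + card (int ` ({1..n} - S))"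
    unfolding VS_def using d fS by (intro card_Un_disjoint) auto
  also have "\<dots> = card S + card ({1..n} - S)"
    by (simp add: card_image inj_on_def)
  also have "\<dots> = n" using assms fS card_mono[OF _ assms] by (simp add: card_Diff_subset)
  finally show ?thesis .
qed

lemma VS_entries: "S \<subseteq> {1..n} \<Longrightarrow> VS n S \<subseteq> entries n"
  unfolding VS_def entries_def by auto

lemma VS_recover: "S \<subseteq> {1..n} \<Longrightarrow> S = {j \<in> {1..n}. - int j \<in> VS n S}"
  unfolding VS_def by auto

lemma VS_iff: assumes "S \<subseteq> {1..n}"
  shows "k \<in> VS n S \<longleftrightarrow> k \<in> entries n \<and> ((k > 0 \<and> nat k \<notin> S) \<or> (k < 0 \<and> nat (-k) \<in> S))"
proof
  assume "k \<in> VS n S" then show "k \<in> entries n \<and> ((k > 0 \<and> nat k \<notin> S) \<or> (k < 0 \<and> nat (-k) \<in> S))"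
    using assms unfolding VS_def entries_def by auto
next
  assume a: "k \<in> entries n \<and> ((k > 0 \<and> nat k \<notin> S) \<or> (k < 0 \<and> nat (-k) \<in> S))"
  show "k \<in> VS n S"
  proof (cases "k > 0")
    case True
    then have "nat k \<in> {1..n} - S" "k = int (nat k)" using a unfolding entries_def by auto
    then show ?thesis unfolding VS_def by (metis UnI2 image_eqI)
  next
    case False
    then have "nat (-k) \<in> S" "k = - int (nat (-k))" using a unfolding entries_def by auto
    then show ?thesis unfolding VS_def by (metis UnI1 image_eqI)
  qed
qed

lemma VS_dich: assumes "S \<subseteq> {1..n}" "k \<in> entries n"
  shows "k \<in> VS n S \<longleftrightarrow> - k \<notin> VS n S"
  using assms(2) unfolding VS_iff[OF assms(1)] by (auto simp: entries_def)

lemma card_quot: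
  assumes "\<And>x y. x \<in> A \<Longrightarrow> y \<in> A \<Longrightarrow> (x,y) \<in> R \<longleftrightarrow> f x = f y" "R \<subseteq> A \<times> A"
  shows "card (A // R) = card (f ` A)"
proof -
  have "A // R = (\<lambda>v. {y\<in>A. f y = v}) ` (f ` A)"
    unfolding quotient_def using assms by (auto; fastforce)
  moreover have "inj_on (\<lambda>v. {y\<in>A. f y = v}) (f ` A)"
    unfolding inj_on_def by blast
  ultimately show ?thesis by (simp add: card_image)
qed

lemma fill_finite: assumes "finite lam" "finite V" shows "finite (fill lam V d)"
proof -
  have "fill lam V d \<subseteq> {f. \<forall>x. (x \<in> lam \<longrightarrow> f x \<in> V) \<and> (x \<notin> lam \<longrightarrow> f x = d)}"
    unfolding fill_def bij_betw_def by auto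
  then show ?thesis using finite_set_of_finite_funs[OF assms] finite_subset by blast
qed



definition posent :: "nat \<Rightarrow> (int \<Rightarrow> box) \<Rightarrow> int set" where
  "posent n p = {k \<in> entries n. content (p k) > 0}"

definition tp :: "box set \<Rightarrow> (int \<Rightarrow> box) \<Rightarrow> int \<times> int" where
  "tp lam p = (SOME t. pos_boxes (card lam) p = shift t lam)"

definition Phi :: "box set \<Rightarrow> (int \<Rightarrow> box) \<Rightarrow> box \<Rightarrow> int" where
  "Phi lam p = (\<lambda>x. if x \<in> lam then the_inv_into (posent (card lam) p) p (padd (tp lam p) x) else 0)"

definition Sp :: "nat \<Rightarrow> (int \<Rightarrow> box) \<Rightarrow> nat set" where
  "Sp n p = {j \<in> {1..n}. content (p (int j)) < 0}"

lemma neg_entries: "k \<in> entries n \<Longrightarrow> - k \<in> entries n"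
  unfolding entries_def by auto

lemma pos_boxes_eq: "pos_boxes n p = p ` posent n p"
  unfolding pos_boxes_def posent_def by auto

lemma T_facts:
  assumes fin: "finite lam" and ne: "lam \<noteq> {}" and m1: "m \<ge> 1"
    and p: "p \<in> T_raw lam m ev"
  defines "n \<equiv> card lam"
  shows "D_young_tableau n p" "D_standard n p"
    "p ` posent n p = padd (tp lam p) ` lam"
    "\<forall>k\<in>entries n. content (p k) \<noteq> 0"
    "inj_on p (posent n p)"
    "posent n p = VS n (Sp n p)"
    "Sp n p \<subseteq> {1..n}"
    "num_neg_in_pos n p = card (Sp n p)"
    "even (card (Sp n p)) \<longleftrightarrow> ev"
    "Min (content ` lam) + (snd (tp lam p) - fst (tp lam p)) = int m"
proof -
  have P: "D_young_tableau n p" "D_standard n p" "min_nonneg_content n p = int m"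
    "\<exists>t. pos_boxes n p = shift t lam" "even (num_neg_in_pos n p) \<longleftrightarrow> ev"
    using p unfolding T_raw_def n_def by auto
  show "D_young_tableau n p" "D_standard n p" using P by auto
  have pb: "pos_boxes n p = shift (tp lam p) lam"
    unfolding tp_def n_def[symmetric] using P(4) by (rule someI_ex)
  then show img: "p ` posent n p = padd (tp lam p) ` lam" by (simp add: pos_boxes_eq shift_padd)
  define t where "t = tp lam p"
  define C where "C = {content (p k) |k. k \<in> entries n \<and> content (p k) \<ge> 0}"
  have finC: "finite C" unfolding C_def
    by (rule finite_subset[of _ "content ` p ` entries n"]) (auto simp: finite_entries)
  have MinC: "Min C = int m" using P(3) unfolding min_nonneg_content_def C_def by simp
  obtain x0 where "x0 \<in> lam" using ne by auto
  then have "padd t x0 \<in> p ` posent n p" using img t_def by auto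
  then obtain k0 where "k0 \<in> posent n p" by auto
  then have "content (p k0) \<in> C" unfolding C_def posent_def by auto
  then have neC: "C \<noteq> {}" by auto
  have Cge: "c \<ge> int m" if "c \<in> C" for c using Min_le[OF finC that] MinC by simp
  show nz: "\<forall>k\<in>entries n. content (p k) \<noteq> 0"
  proof (intro ballI notI)
    fix k assume "k \<in> entries n" "content (p k) = 0"
    then have "0 \<in> C" unfolding C_def by force
    then show False using Cge m1 by force
  qed
  have Ceq: "C = content ` padd t ` lam"
  proof -
    have "C = content ` p ` posent n p" unfolding C_def posent_def using nz by force
    then show ?thesis using img t_def by simp
  qed
  have "Min C = Min (content ` lam) + (snd t - fst t)"
    unfolding Ceq image_image content_padd using fin ne by (rule Min_add_commute)
  then show "Min (content ` lam) + (snd (tp lam p) - fst (tp lam p)) = int m" using MinC t_def by simp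
  show "inj_on p (posent n p)"
    using P(1) unfolding inj_on_def D_young_tableau_def posent_def by force
  show Ssub: "Sp n p \<subseteq> {1..n}" unfolding Sp_def by auto
  have antisym: "content (p (-k)) = - content (p k)" if "k \<in> entries n" for k
    using P(1) that unfolding D_young_tableau_def by auto
  show pe: "posent n p = VS n (Sp n p)"
  proof (rule set_eqI)
    fix k
    show "k \<in> posent n p \<longleftrightarrow> k \<in> VS n (Sp n p)"
    proof (cases "k \<in> entries n")
      case False then show ?thesis unfolding VS_iff[OF Ssub] posent_def by auto
    next
      case True
      then have k0: "k \<noteq> 0" "\<bar>k\<bar> \<le> int n" unfolding entries_def by auto
      show ?thesis
      proof (cases "k > 0")
        case kp: True
        have "nat k \<in> {1..n}" using k0 kp by auto
        moreover have "int (nat k) = k" using kp by simp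
        ultimately have "nat k \<in> Sp n p \<longleftrightarrow> content (p k) < 0" unfolding Sp_def by auto
        then show ?thesis unfolding VS_iff[OF Ssub] posent_def using True kp nz by force
      next
        case kn: False
        have "nat (-k) \<in> {1..n}" using k0 kn by auto
        moreover have "int (nat (-k)) = -k" using kn by simp
        ultimately have "nat (-k) \<in> Sp n p \<longleftrightarrow> content (p (-k)) < 0" unfolding Sp_def by auto
        then show ?thesis unfolding VS_iff[OF Ssub] posent_def using True kn k0 antisym[OF True] by force
      qed
    qed
  qed
  have "{k \<in> entries n. k < 0 \<and> content (p k) > 0} = (\<lambda>j. - int j) ` Sp n p"
  proof -
    have "{k \<in> entries n. k < 0 \<and> content (p k) > 0} = {k \<in> VS n (Sp n p). k < 0}"
      using pe unfolding posent_def by auto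
    also have "\<dots> = (\<lambda>j. - int j) ` Sp n p" unfolding VS_def using Ssub by auto
    finally show ?thesis .
  qed
  then show nn: "num_neg_in_pos n p = card (Sp n p)"
    unfolding num_neg_in_pos_def by (simp add: card_image inj_on_def)
  show "even (card (Sp n p)) \<longleftrightarrow> ev" using P(5) nn by simp
qed


lemma Phi_facts:
  assumes fin: "finite lam" and ne: "lam \<noteq> {}" and m1: "m \<ge> 1"
    and p: "p \<in> T_raw lam m ev"
  defines "n \<equiv> card lam"
  shows "\<And>x. x \<in> lam \<Longrightarrow> Phi lam p x \<in> posent n p \<and> p (Phi lam p x) = padd (tp lam p) x"
    "Phi lam p \<in> fill lam (posent n p) 0"
proof -
  note F = T_facts[OF fin ne m1 p, folded n_def]
  define t where "t = tp lam p"
  have Pd: "Phi lam p x = the_inv_into (posent n p) p (padd t x)" if "x \<in> lam" for x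
    using that unfolding Phi_def t_def n_def by simp
  show A: "Phi lam p x \<in> posent n p \<and> p (Phi lam p x) = padd (tp lam p) x" if x: "x \<in> lam" for x
  proof -
    have "padd t x \<in> p ` posent n p" using F(3) x t_def by auto
    then show ?thesis using Pd[OF x] the_inv_into_into[OF F(5)] f_the_inv_into_f[OF F(5)] t_def
      by (metis order_refl)
  qed
  have "bij_betw (Phi lam p) lam (posent n p)"
    unfolding bij_betw_def
  proof
    show "inj_on (Phi lam p) lam"
    proof (rule inj_onI)
      fix x y assume "x \<in> lam" "y \<in> lam" "Phi lam p x = Phi lam p y"
      then have "padd t x = padd t y" using A t_def by metis
      then show "x = y" using padd_inj[of t] unfolding inj_def by blast
    qed
    show "Phi lam p ` lam = posent n p"
    proof
      show "Phi lam p ` lam \<subseteq> posent n p" using A by auto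
      show "posent n p \<subseteq> Phi lam p ` lam"
      proof
        fix k assume k: "k \<in> posent n p"
        then have "p k \<in> padd t ` lam" using F(3) t_def by auto
        then obtain x where x: "x \<in> lam" "p k = padd t x" by auto
        then have "Phi lam p x = k" using Pd[OF x(1)] the_inv_into_f_f[OF F(5) k] by simp
        then show "k \<in> Phi lam p ` lam" using x by auto
      qed
    qed
  qed
  moreover have "\<forall>x. x \<notin> lam \<longrightarrow> Phi lam p x = 0" unfolding Phi_def by simp
  moreover have "(\<forall>x\<in>lam. \<forall>y\<in>lam.
        (fst x = fst y \<and> snd x < snd y \<longrightarrow> Phi lam p x < Phi lam p y) \<and>
        (snd x = snd y \<and> fst x < fst y \<longrightarrow> Phi lam p x < Phi lam p y))"
  proof (intro ballI conjI impI)
    fix x y assume x: "x \<in> lam" and y: "y \<in> lam"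
    have ea: "Phi lam p x \<in> entries n" "Phi lam p y \<in> entries n" using A x y unfolding posent_def by auto
    have pa: "p (Phi lam p x) = padd t x" "p (Phi lam p y) = padd t y" using A x y t_def by auto
    have st: "\<forall>a\<in>entries n. \<forall>b\<in>entries n.
        (fst (p a) = fst (p b) \<and> snd (p a) < snd (p b) \<longrightarrow> a < b) \<and>
        (snd (p a) = snd (p b) \<and> fst (p a) < fst (p b) \<longrightarrow> a < b)"
      using F(2) unfolding D_standard_def by blast
    show "Phi lam p x < Phi lam p y" if "fst x = fst y \<and> snd x < snd y"
      using st ea pa that unfolding padd_def by fastforce
    show "Phi lam p x < Phi lam p y" if "snd x = snd y \<and> fst x < fst y"
      using st ea pa that unfolding padd_def by fastforce
  qed
  ultimately show "Phi lam p \<in> fill lam (posent n p) 0" unfolding fill_def by blast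
qed

lemma equiv_Phi:
  assumes fin: "finite lam" and ne: "lam \<noteq> {}" and m1: "m \<ge> 1"
    and p: "p \<in> T_raw lam m ev" and q: "q \<in> T_raw lam m ev"
  defines "n \<equiv> card lam"
  shows "same_D_tableau n p q \<longleftrightarrow> Phi lam p = Phi lam q"
proof -
  note Fp = T_facts[OF fin ne m1 p, folded n_def]
  note Fq = T_facts[OF fin ne m1 q, folded n_def]
  note Gp = Phi_facts[OF fin ne m1 p, folded n_def]
  note Gq = Phi_facts[OF fin ne m1 q, folded n_def]
  define a where "a = tp lam p"
  define b where "b = tp lam q"
  have imp: "Phi lam p ` lam = posent n p" "Phi lam q ` lam = posent n q"
    using Gp(2) Gq(2) unfolding fill_def bij_betw_def by auto
  show ?thesis
  proof
    assume S: "same_D_tableau n p q"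
    show "Phi lam p = Phi lam q"
    proof (cases "p = q")
      case True then show ?thesis by simp
    next
      case False
      then obtain t where t: "\<forall>k\<in>entries n. (content (p k) > 0 \<longleftrightarrow> content (q k) > 0) \<and>
          (content (p k) > 0 \<longrightarrow> q k = (fst (p k) + t, snd (p k) + t))"
        using S unfolding same_D_tableau_def by blast
      have pe: "posent n p = posent n q" using t unfolding posent_def by auto
      have qk: "q k = padd (t,t) (p k)" if "k \<in> posent n p" for k
        using t that unfolding posent_def padd_def by auto
      have "q ` posent n q = padd (t,t) ` p ` posent n p"
        using qk pe by (auto simp: image_iff)
      also have "\<dots> = padd (t + fst a, t + snd a) ` lam"
        using Fp(3) a_def by (simp add: image_image padd_padd)
      finally have "padd b ` lam = padd (t + fst a, t + snd a) ` lam" using Fq(3) b_def by simp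
      then have bq: "b = (t + fst a, t + snd a)" using shift_unique[OF fin ne] by blast
      show ?thesis
      proof
        fix x show "Phi lam p x = Phi lam q x"
        proof (cases "x \<in> lam")
          case False then show ?thesis unfolding Phi_def by simp
        next
          case True
          define k where "k = Phi lam p x"
          have k: "k \<in> posent n q" "p k = padd a x" using Gp(1)[OF True] pe k_def a_def by auto
          have "q k = padd b x" using qk[of k] k pe bq by (simp add: padd_padd add.commute)
          then have "the_inv_into (posent n q) q (padd b x) = k" using the_inv_into_f_f[OF Fq(5) k(1)] by simp
          then show ?thesis using True k_def unfolding Phi_def b_def n_def by simp
        qed
      qed
    qed
  next
    assume E: "Phi lam p = Phi lam q"
    then have pe: "posent n p = posent n q" using imp by simp
    have dd: "snd a - fst a = snd b - fst b" using Fp(10) Fq(10) a_def b_def by simp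
    define t where "t = fst b - fst a"
    have "\<forall>k\<in>entries n. (content (p k) > 0 \<longleftrightarrow> content (q k) > 0) \<and>
          (content (p k) > 0 \<longrightarrow> q k = (fst (p k) + t, snd (p k) + t))"
    proof (intro ballI conjI impI)
      fix k assume k: "k \<in> entries n"
      show "content (p k) > 0 \<longleftrightarrow> content (q k) > 0" using pe k unfolding posent_def by auto
      assume "content (p k) > 0"
      then have "k \<in> posent n p" using k unfolding posent_def by auto
      then obtain x where x: "x \<in> lam" "k = Phi lam p x" using imp by (metis imageE)
      have "p k = padd a x" using Gp(1)[OF x(1)] x a_def by simp
      moreover have "q k = padd b x" using Gq(1)[OF x(1)] x E b_def by simp
      ultimately show "q k = (fst (p k) + t, snd (p k) + t)" using dd unfolding padd_def t_def by auto
    qed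
    moreover have "\<not> has_zero_box n p" "\<not> has_zero_box n q"
      using Fp(4) Fq(4) unfolding has_zero_box_def by auto
    ultimately show "same_D_tableau n p q" unfolding same_D_tableau_def by blast
  qed
qed



lemma content_rot: "content (s - fst y, s - snd y) = - content y"
  unfolding content_def by simp

lemma construct:
  assumes sk: "skew_diagram lam" and ne: "lam \<noteq> {}" and m1: "m \<ge> 1"
    and S: "S \<subseteq> {1..card lam}" and g: "g \<in> fill lam (VS (card lam) S) 0"
  shows "\<exists>p. p \<in> T_raw lam m (even (card S)) \<and> Phi lam p = g"
proof -
  define n where "n = card lam"
  define V where "V = VS n S"
  have S': "S \<subseteq> {1..n}" using S n_def by simp
  have fin: "finite lam" using sk unfolding skew_diagram_def by simp
  have conv: "\<And>i j i' j' a b. (i,j) \<in> lam \<Longrightarrow> (i',j') \<in> lam \<Longrightarrow> i \<le> a \<Longrightarrow> a \<le> i'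
        \<Longrightarrow> j \<le> b \<Longrightarrow> b \<le> j' \<Longrightarrow> (a,b) \<in> lam"
    using sk unfolding skew_diagram_def by blast
  have gb: "bij_betw g lam V" and g0: "\<And>x. x \<notin> lam \<Longrightarrow> g x = 0"
    and gst: "\<And>x y. x \<in> lam \<Longrightarrow> y \<in> lam \<Longrightarrow> fst x = fst y \<Longrightarrow> snd x < snd y \<Longrightarrow> g x < g y"
    and gst2: "\<And>x y. x \<in> lam \<Longrightarrow> y \<in> lam \<Longrightarrow> snd x = snd y \<Longrightarrow> fst x < fst y \<Longrightarrow> g x < g y"
    using g unfolding fill_def V_def n_def by auto
  define h where "h = the_inv_into lam g"
  have ginj: "inj_on g lam" and gimg: "g ` lam = V" using gb unfolding bij_betw_def by auto
  have hV: "h k \<in> lam \<and> g (h k) = k" if "k \<in> V" for k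
    using that the_inv_into_into[OF ginj, of k lam] f_the_inv_into_f[OF ginj, of k] gimg h_def by auto
  have hg: "h (g x) = x" if "x \<in> lam" for x using the_inv_into_f_f[OF ginj that] h_def by simp
  have gV: "g x \<in> V" if "x \<in> lam" for x using gimg that by auto
  have Vent: "V \<subseteq> entries n" using VS_entries[OF S'] V_def by simp
  have dich: "k \<in> V \<longleftrightarrow> - k \<notin> V" if "k \<in> entries n" for k using VS_dich[OF S' that] V_def by simp
  define cmin where "cmin = Min (content ` lam)"
  define t where "t = (0::int, int m - cmin)"
  define P where "P = padd t ` lam"
  have finP: "finite P" "P \<noteq> {}" using fin ne P_def by auto
  have contP: "content y \<ge> int m" if yP: "y \<in> P" for y
  proof -
    obtain x where x: "x \<in> lam" "y = padd t x" using yP P_def by blast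
    have "cmin \<le> content x" unfolding cmin_def using fin x(1) by simp
    then show ?thesis using x(2) content_padd[of t x] t_def by simp
  qed
  have padd_t: "padd t x = (fst x, snd x + (int m - cmin))" for x unfolding padd_def t_def by simp
  have convP: "(a,b) \<in> P" if "(i,j) \<in> P" "(i',j') \<in> P" "i \<le> a" "a \<le> i'" "j \<le> b" "b \<le> j'" for i j i' j' a b
  proof -
    define c where "c = int m - cmin"
    have "(i, j - c) \<in> lam" "(i', j' - c) \<in> lam" using that(1,2) unfolding P_def padd_t c_def by auto
    then have "(a, b - c) \<in> lam" using conv that by (meson diff_right_mono)
    then have "(a, b) = padd t (a, b - c)" unfolding padd_t c_def by simp
    then show ?thesis unfolding P_def using \<open>(a, b - c) \<in> lam\<close> by (rule image_eqI)
  qed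
  have key1: "fst w < snd y" if w: "w \<in> P" and y: "y \<in> P" for w y
  proof -
    obtain a b c d where wd: "w = (a,b)" and yd: "y = (c,d)" by (cases w, cases y)
    have cw: "a < b" using contP[OF w] m1 wd unfolding content_def by simp
    have cy: "c < d" using contP[OF y] m1 yd unfolding content_def by simp
    show ?thesis
    proof (cases "a \<le> c")
      case True then show ?thesis using cy wd yd by simp
    next
      case False
      show ?thesis
      proof (cases "b \<le> d")
        case True then show ?thesis using cw wd yd by simp
      next
        case False
        then have "(a,d) \<in> P" using convP[of c d a b a d] w y wd yd \<open>\<not> a \<le> c\<close> by simp
        then show ?thesis using contP[of "(a,d)"] m1 yd wd unfolding content_def by simp
      qed
    qed
  qed
  define R where "R = Max (fst ` P)"
  define s where "s = 2 * R + 1"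
  define rot where "rot = (\<lambda>y::box. (s - fst y, s - snd y))"
  have Rge: "fst y \<le> R" if "y \<in> P" for y unfolding R_def using finP that by simp
  have "R \<in> fst ` P" unfolding R_def using finP by (intro Max_in) auto
  then obtain w0 where w0: "w0 \<in> P" "fst w0 = R" by (auto simp: image_iff)
  have key: "fst y < fst (rot z) \<and> snd (rot z) < snd y" if "y \<in> P" "z \<in> P" for y z
    using Rge[OF that(1)] Rge[OF that(2)] key1[OF w0(1) that(1)] key1[OF w0(1) that(2)] w0(2)
    unfolding rot_def s_def by simp
  have crot: "content (rot y) = - content y" for y unfolding rot_def by (rule content_rot)
  have rotinj: "rot y = rot z \<Longrightarrow> y = z" for y z unfolding rot_def by (auto simp: prod_eq_iff)
  define pos where "pos = (\<lambda>k. if k \<in> entries n then (if k \<in> V then padd t (h k) else rot (padd t (h (-k)))) else (0,0))"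
  have posV: "pos k = padd t (h k) \<and> padd t (h k) \<in> P" if kV: "k \<in> V" for k
  proof -
    have "k \<in> entries n" using kV Vent by blast
    then have "pos k = padd t (h k)" using kV unfolding pos_def by simp
    moreover have "h k \<in> lam" using hV kV by blast
    ultimately show ?thesis unfolding P_def by simp
  qed
  have posN: "- k \<in> V \<and> pos k = rot (padd t (h (-k))) \<and> padd t (h (-k)) \<in> P" if "k \<in> entries n" "k \<notin> V" for k
  proof -
    have "- k \<in> V" using dich[OF that(1)] that(2) by blast
    moreover have "pos k = rot (padd t (h (-k)))" using that unfolding pos_def by simp
    moreover have "h (-k) \<in> lam" using hV calculation(1) by blast
    ultimately show ?thesis unfolding P_def by simp
  qed
  have posg: "pos (g x) = padd t x" if "x \<in> lam" for x using posV[OF gV[OF that]] hg[OF that] by simp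
  have imgpos: "pos ` entries n = P \<union> rot ` P"
  proof
    show "pos ` entries n \<subseteq> P \<union> rot ` P"
    proof
      fix y assume "y \<in> pos ` entries n"
      then obtain k where k: "k \<in> entries n" "y = pos k" by blast
      show "y \<in> P \<union> rot ` P"
      proof (cases "k \<in> V")
        case True
        have "y \<in> P" using posV[OF True] k(2) by simp
        then show ?thesis by blast
      next
        case False
        have "y \<in> rot ` P" using posN[OF k(1) False] k(2) by simp
        then show ?thesis by blast
      qed
    qed
    show "P \<union> rot ` P \<subseteq> pos ` entries n"
    proof
      fix y assume "y \<in> P \<union> rot ` P"
      then show "y \<in> pos ` entries n"
      proof
        assume "y \<in> P"
        then obtain x where x: "x \<in> lam" "y = padd t x" using P_def by blast
        have "g x \<in> entries n" using gV[OF x(1)] Vent by blast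
        moreover have "pos (g x) = y" using posg[OF x(1)] x(2) by simp
        ultimately show ?thesis by (metis imageI)
      next
        assume "y \<in> rot ` P"
        then obtain x where x: "x \<in> lam" "y = rot (padd t x)" using P_def by blast
        define k where "k = - g x"
        have ke: "k \<in> entries n" using gV[OF x(1)] Vent neg_entries k_def by auto
        have "k \<notin> V" using dich[OF ke] gV[OF x(1)] k_def by simp
        then have "pos k = y" using posN[OF ke] x hg k_def by simp
        then show ?thesis using ke by auto
      qed
    qed
  qed
  have cposV: "content (pos k) \<ge> int m" if "k \<in> V" for k 
  proof -
    have "content (padd t (h k)) \<ge> int m" using posV[OF that] contP by blast
    then show ?thesis using posV[OF that] by simp
  qed
  have cposN: "content (pos k) < 0" if "k \<in> entries n" "k \<notin> V" for k
  proof -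
    have "content (padd t (h (-k))) \<ge> int m" using posN[OF that] contP by blast
    then show ?thesis using posN[OF that] crot m1 by simp
  qed
  have pe: "posent n pos = V"
  proof (rule set_eqI)
    fix k
    show "k \<in> posent n pos \<longleftrightarrow> k \<in> V"
    proof
      assume "k \<in> posent n pos"
      then have "k \<in> entries n" "content (pos k) > 0" unfolding posent_def by auto
      show "k \<in> V"
      proof (rule ccontr)
        assume "k \<notin> V"
        then have "content (pos k) < 0" using cposN \<open>k \<in> entries n\<close> by blast
        then show False using \<open>content (pos k) > 0\<close> by simp
      qed
    next
      assume kV: "k \<in> V"
      then have "k \<in> entries n" using Vent by blast
      moreover have "content (pos k) > 0" using cposV[OF kV] m1 by simp
      ultimately show "k \<in> posent n pos" unfolding posent_def by simp
    qed
  qed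
  have Pimg: "pos ` V = P"
  proof
    show "pos ` V \<subseteq> P"
    proof
      fix y assume "y \<in> pos ` V"
      then obtain k where k: "k \<in> V" "y = pos k" by blast
      then show "y \<in> P" using posV[OF k(1)] by simp
    qed
    show "P \<subseteq> pos ` V"
    proof
      fix y assume "y \<in> P"
      then obtain x where x: "x \<in> lam" "y = padd t x" using P_def by blast
      then have "y = pos (g x)" using posg by simp
      then show "y \<in> pos ` V" using gV[OF x(1)] by blast
    qed
  qed
  have posinj: "inj_on pos V"
  proof (rule inj_onI)
    fix a b assume "a \<in> V" "b \<in> V" "pos a = pos b"
    have "padd t (h a) = pos a" using posV[OF \<open>a \<in> V\<close>] by simp
    also have "\<dots> = pos b" by fact
    also have "\<dots> = padd t (h b)" using posV[OF \<open>b \<in> V\<close>] by simp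
    finally have "padd t (h a) = padd t (h b)" .
    then have hab: "h a = h b" using padd_inj[of t] unfolding inj_def by blast
    have "a = g (h a)" using hV[OF \<open>a \<in> V\<close>] by simp
    also have "\<dots> = g (h b)" using hab by simp
    also have "\<dots> = b" using hV[OF \<open>b \<in> V\<close>] by simp
    finally show "a = b" .
  qed
  have sd: "skew_diagram (pos ` entries n)"
    unfolding skew_diagram_def imgpos
  proof (intro conjI allI impI)
    show "finite (P \<union> rot ` P)" using finP by simp
    fix i j i' j' a b
    assume A: "(i, j) \<in> P \<union> rot ` P" "(i', j') \<in> P \<union> rot ` P" "i \<le> a" "a \<le> i'" "j \<le> b" "b \<le> j'"
    show "(a, b) \<in> P \<union> rot ` P"
    proof (cases "(i,j) \<in> P")
      case T1: True
      show ?thesis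
      proof (cases "(i',j') \<in> P")
        case True then show ?thesis using convP T1 A by blast
      next
        case False
        then obtain z where z: "z \<in> P" "(i',j') = rot z" using A(2) by blast
        have "snd (rot z) < snd (i,j)" using key[OF T1 z(1)] by blast
        moreover have "snd (rot z) = j'" using z(2) by (metis snd_conv)
        ultimately show ?thesis using A by simp
      qed
    next
      case F1: False
      then obtain z1 where z1: "z1 \<in> P" "(i,j) = rot z1" using A(1) by blast
      show ?thesis
      proof (cases "(i',j') \<in> P")
        case True
        have "fst (i',j') < fst (rot z1)" using key[OF True z1(1)] by blast
        moreover have "fst (rot z1) = i" using z1(2) by (metis fst_conv)
        ultimately show ?thesis using A by simp
      next
        case False
        then obtain z2 where z2: "z2 \<in> P" "(i',j') = rot z2" using A(2) by blast
        have e1: "z1 = (s - i, s - j)" "z2 = (s - i', s - j')" using z1 z2 unfolding rot_def by (auto simp: prod_eq_iff)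
        have "(s - a, s - b) \<in> P" using convP[of "s - i'" "s - j'" "s - i" "s - j"] z1 z2 e1 A by auto
        moreover have "(a, b) = rot (s - a, s - b)" unfolding rot_def by simp
        ultimately show ?thesis by blast
      qed
    qed
  qed
  have sep: "fst (pos a) < fst (pos b) \<and> snd (pos b) < snd (pos a)" if aV: "a \<in> V" and b: "b \<in> entries n" "b \<notin> V" for a b
  proof -
    have pa: "pos a = padd t (h a)" and Ya: "padd t (h a) \<in> P" using posV[OF aV] by auto
    have pb: "pos b = rot (padd t (h (-b)))" and Zb: "padd t (h (-b)) \<in> P" using posN[OF b] by auto
    show ?thesis unfolding pa pb using key[OF Ya Zb] .
  qed
  have anti: "content (pos (-k)) = - content (pos k)" if k: "k \<in> entries n" for k
  proof (cases "k \<in> V")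
    case True
    have nV: "-k \<notin> V" using dich[OF k] True by simp
    have "pos (-k) = rot (padd t (h (- (-k))))" using posN[OF neg_entries[OF k] nV] by blast
    also have "\<dots> = rot (pos k)" using posV[OF True] by simp
    finally show ?thesis using crot by simp
  next
    case False
    have mV: "-k \<in> V" using posN[OF k False] by blast
    have "pos k = rot (padd t (h (-k)))" using posN[OF k False] by blast
    also have "\<dots> = rot (pos (-k))" using posV[OF mV] by simp
    finally show ?thesis using crot by simp
  qed
  have injent: "b = - a \<and> content (pos a) = 0" if "a \<in> entries n" "b \<in> entries n" "a \<noteq> b" "pos a = pos b" for a b
  proof -
    have False
    proof (cases "a \<in> V")
      case aV: True
      show False
      proof (cases "b \<in> V")
        case True then show False using posinj aV that unfolding inj_on_def by blast
      next
        case False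
        have "fst (pos a) < fst (pos b)" using sep[OF aV that(2) False] by blast
        then show False using that(4) by simp
      qed
    next
      case aN: False
      show False
      proof (cases "b \<in> V")
        case True
        have "fst (pos b) < fst (pos a)" using sep[OF True that(1) aN] by blast
        then show False using that(4) by simp
      next
        case False
        have "rot (padd t (h (-a))) = pos a" using posN[OF that(1) aN] by simp
        also have "\<dots> = pos b" by (rule that(4))
        also have "\<dots> = rot (padd t (h (-b)))" using posN[OF that(2) False] by simp
        finally have "padd t (h (-a)) = padd t (h (-b))" by (rule rotinj)
        then have hab: "h (-a) = h (-b)" using padd_inj[of t] unfolding inj_def by blast
        have "-a = g (h (-a))" using hV posN[OF that(1) aN] by simp
        also have "\<dots> = g (h (-b))" using hab by simp
        also have "\<dots> = -b" using hV posN[OF that(2) False] by simp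
        finally have "-a = -b" .
        then show False using that(3) by simp
      qed
    qed
    then show ?thesis by simp
  qed
  have outside: "\<forall>k. k \<notin> entries n \<longrightarrow> pos k = (0,0)" unfolding pos_def by simp
  have DY: "D_young_tableau n pos"
    unfolding D_young_tableau_def using sd anti injent outside by blast
  have DS: "D_standard n pos"
    unfolding D_standard_def
  proof (intro ballI conjI impI)
    fix a b assume a: "a \<in> entries n" and b: "b \<in> entries n"
    {
      assume H: "fst (pos a) = fst (pos b) \<and> snd (pos a) < snd (pos b) \<or> snd (pos a) = snd (pos b) \<and> fst (pos a) < fst (pos b)"
      have "a < b"
      proof (cases "a \<in> V")
        case aV: True
        show ?thesis
        proof (cases "b \<in> V")
          case bV: True
          have l: "h a \<in> lam" "h b \<in> lam" and ga: "g (h a) = a" and gb': "g (h b) = b" using hV aV bV by auto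
          have pa: "pos a = padd t (h a)" and pb: "pos b = padd t (h b)" using posV aV bV by auto
          have H': "fst (h a) = fst (h b) \<and> snd (h a) < snd (h b) \<or> snd (h a) = snd (h b) \<and> fst (h a) < fst (h b)"
            using H unfolding pa pb padd_def by auto
          then have "g (h a) < g (h b)" using gst[OF l] gst2[OF l] by blast
          then show ?thesis using ga gb' by simp
        next
          case False
          then show ?thesis using H sep[OF aV b False] by auto
        qed
      next
        case aN: False
        show ?thesis
        proof (cases "b \<in> V")
          case True
          then show ?thesis using H sep[OF True a aN] by auto
        next
          case bN: False
          have l: "h (-b) \<in> lam" "h (-a) \<in> lam" "g (h (-a)) = -a" "g (h (-b)) = -b"
            using hV posN[OF a aN] posN[OF b bN] by auto
          have pa: "pos a = rot (padd t (h (-a)))" and pb: "pos b = rot (padd t (h (-b)))"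
            using posN[OF a aN] posN[OF b bN] by auto
          have H': "fst (h (-b)) = fst (h (-a)) \<and> snd (h (-b)) < snd (h (-a)) \<or>
                snd (h (-b)) = snd (h (-a)) \<and> fst (h (-b)) < fst (h (-a))"
            using H unfolding pa pb rot_def padd_def by auto
          then have "g (h (-b)) < g (h (-a))" using gst[OF l(1,2)] gst2[OF l(1,2)] by blast
          then have "-b < -a" using l by simp
          then show ?thesis by simp
        qed
      qed
    }
    then show "fst (pos a) = fst (pos b) \<and> snd (pos a) < snd (pos b) \<Longrightarrow> a < b"
      "snd (pos a) = snd (pos b) \<and> fst (pos a) < fst (pos b) \<Longrightarrow> a < b" by blast+
  qed
  have nz: "content (pos k) \<noteq> 0" if "k \<in> entries n" for k
  proof (cases "k \<in> V")
    case True then show ?thesis using cposV[OF True] m1 by simp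
  next
    case False then show ?thesis using cposN[OF that False] by simp
  qed
  have MN: "min_nonneg_content n pos = int m"
  proof -
    have "{content (pos k) |k. k \<in> entries n \<and> content (pos k) \<ge> 0} = content ` pos ` posent n pos"
      unfolding posent_def using nz by force
    also have "\<dots> = content ` P" using pe Pimg by simp
    finally have E: "{content (pos k) |k. k \<in> entries n \<and> content (pos k) \<ge> 0} = content ` P" .
    have "cmin \<in> content ` lam" unfolding cmin_def using fin ne by (intro Min_in) auto
    then obtain x0 where x0: "x0 \<in> lam" "content x0 = cmin" by (auto simp: image_iff)
    have "content (padd t x0) = int m" using x0 content_padd[of t x0] t_def by simp
    moreover have "padd t x0 \<in> P" using x0 P_def by simp
    ultimately have mem: "int m \<in> content ` P" by (metis imageI)
    have "Min (content ` P) = int m"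
    proof (rule Min_eqI)
      show "finite (content ` P)" using finP by simp
      show "int m \<in> content ` P" by (rule mem)
      fix c assume "c \<in> content ` P"
      then obtain y where "y \<in> P" "c = content y" by blast
      then show "int m \<le> c" using contP by simp
    qed
    then show ?thesis unfolding min_nonneg_content_def E by simp
  qed
  have PB: "pos_boxes n pos = shift t lam"
    unfolding pos_boxes_eq pe Pimg shift_padd P_def ..
  have NN: "num_neg_in_pos n pos = card S"
  proof -
    have "{k \<in> entries n. k < 0 \<and> content (pos k) > 0} = {k \<in> V. k < 0}"
      using pe unfolding posent_def by auto
    also have "\<dots> = (\<lambda>j. - int j) ` S" unfolding V_def VS_def using S' by auto
    finally show ?thesis unfolding num_neg_in_pos_def by (simp add: card_image inj_on_def)
  qed
  have Tr: "pos \<in> T_raw lam m (even (card S))"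
    unfolding T_raw_def n_def[symmetric] mem_Collect_eq
  proof (intro conjI)
    show "D_young_tableau n pos" by (rule DY)
    show "D_standard n pos" by (rule DS)
    show "min_nonneg_content n pos = int m" by (rule MN)
    show "\<exists>t. pos_boxes n pos = shift t lam" using PB by blast
    show "even (num_neg_in_pos n pos) = even (card S)" using NN by simp
  qed
  have "\<exists>t. pos_boxes (card lam) pos = shift t lam" using PB n_def by blast
  then have "pos_boxes (card lam) pos = shift (tp lam pos) lam"
    unfolding tp_def by (rule someI_ex)
  then have "padd (tp lam pos) ` lam = padd t ` lam" using PB n_def by (simp add: shift_padd)
  then have tpe: "tp lam pos = t" using shift_unique[OF fin ne] by blast
  have "Phi lam pos = g"
  proof
    fix x show "Phi lam pos x = g x"
    proof (cases "x \<in> lam")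
      case False then show ?thesis using g0 unfolding Phi_def by simp
    next
      case True
      have "the_inv_into V pos (padd t x) = g x"
        using the_inv_into_f_f[OF posinj gV[OF True]] posg[OF True] by simp
      then show ?thesis using True pe tpe unfolding Phi_def n_def by simp
    qed
  qed
  then show ?thesis using Tr by blast
qed



lemma main_count:
  assumes sk: "skew_diagram lam" and ne: "lam \<noteq> {}" and m1: "m \<ge> 1"
  shows "card (T_D lam m ev) = 2 ^ (card lam - 1) * f_shape lam"
proof -
  define n where "n = card lam"
  have fin: "finite lam" using sk unfolding skew_diagram_def by simp
  have n1: "n \<ge> 1" using fin ne n_def by (simp add: Suc_le_eq card_gt_0_iff)
  define A where "A = T_raw lam m ev"
  define R where "R = {(p,q). p \<in> A \<and> q \<in> A \<and> same_D_tableau n p q}"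
  have TD: "T_D lam m ev = A // R" unfolding T_D_def A_def R_def n_def by simp
  have "card (A // R) = card (Phi lam ` A)"
  proof (rule card_quot)
    fix x y assume "x \<in> A" "y \<in> A"
    then show "(x, y) \<in> R \<longleftrightarrow> Phi lam x = Phi lam y"
      unfolding R_def using equiv_Phi[OF fin ne m1, of x ev y] A_def n_def by simp
  next
    show "R \<subseteq> A \<times> A" unfolding R_def by auto
  qed
  define Sub where "Sub = {S. S \<subseteq> {1..n} \<and> (even (card S) \<longleftrightarrow> ev)}"
  have img: "Phi lam ` A = (\<Union>S\<in>Sub. fill lam (VS n S) 0)"
  proof
    show "Phi lam ` A \<subseteq> (\<Union>S\<in>Sub. fill lam (VS n S) 0)"
    proof
      fix g assume "g \<in> Phi lam ` A"
      then obtain p where p: "p \<in> T_raw lam m ev" "g = Phi lam p" unfolding A_def by blast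
      note F = T_facts[OF fin ne m1 p(1), folded n_def]
      have "g \<in> fill lam (VS n (Sp n p)) 0" using Phi_facts(2)[OF fin ne m1 p(1)] F(6) p(2) n_def by simp
      moreover have "Sp n p \<in> Sub" unfolding Sub_def using F(7) F(9) by simp
      ultimately show "g \<in> (\<Union>S\<in>Sub. fill lam (VS n S) 0)" by blast
    qed
    show "(\<Union>S\<in>Sub. fill lam (VS n S) 0) \<subseteq> Phi lam ` A"
    proof
      fix g assume "g \<in> (\<Union>S\<in>Sub. fill lam (VS n S) 0)"
      then obtain S where S: "S \<in> Sub" "g \<in> fill lam (VS n S) 0" by blast
      have Ss: "S \<subseteq> {1..card lam}" "even (card S) = ev" using S(1) unfolding Sub_def n_def by auto
      obtain p where "p \<in> T_raw lam m (even (card S))" "Phi lam p = g"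
        using construct[OF sk ne m1 Ss(1)] S(2) n_def by blast
      then show "g \<in> Phi lam ` A" unfolding A_def using Ss(2) by blast
    qed
  qed
  have finSub: "finite Sub" unfolding Sub_def by (rule finite_subset[of _ "Pow {1..n}"]) auto
  have cardU: "card (\<Union>S\<in>Sub. fill lam (VS n S) 0) = (\<Sum>S\<in>Sub. card (fill lam (VS n S) 0))"
  proof (rule card_UN_disjoint[OF finSub])
    show "\<forall>S\<in>Sub. finite (fill lam (VS n S) 0)"
      using fill_finite[OF fin VS_finite] unfolding Sub_def by blast
    show "\<forall>S\<in>Sub. \<forall>S'\<in>Sub. S \<noteq> S' \<longrightarrow> fill lam (VS n S) 0 \<inter> fill lam (VS n S') 0 = {}"
    proof (intro ballI impI)
      fix S S' assume S: "S \<in> Sub" and S': "S' \<in> Sub" and ne': "S \<noteq> S'"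
      show "fill lam (VS n S) 0 \<inter> fill lam (VS n S') 0 = {}"
      proof (rule ccontr)
        assume "fill lam (VS n S) 0 \<inter> fill lam (VS n S') 0 \<noteq> {}"
        then obtain g where "g \<in> fill lam (VS n S) 0" "g \<in> fill lam (VS n S') 0" by blast
        then have "VS n S = VS n S'" unfolding fill_def bij_betw_def by auto
        moreover have "S \<subseteq> {1..n}" "S' \<subseteq> {1..n}" using S S' unfolding Sub_def by auto
        ultimately have "S = S'" using VS_recover by metis
        then show False using ne' by simp
      qed
    qed
  qed
  have "\<forall>S\<in>Sub. card (fill lam (VS n S) 0) = f_shape lam"
  proof
    fix S assume "S \<in> Sub"
    then have "S \<subseteq> {1..n}" unfolding Sub_def by auto
    then show "card (fill lam (VS n S) 0) = f_shape lam"
      using fill_card_enum[OF VS_finite VS_card] n_def by simp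
  qed
  then have "(\<Sum>S\<in>Sub. card (fill lam (VS n S) 0)) = card Sub * f_shape lam" by simp
  moreover have "card Sub = 2 ^ (n - 1)" unfolding Sub_def using even_subsets[OF n1] by simp
  ultimately show ?thesis
    using TD \<open>card (A // R) = card (Phi lam ` A)\<close> img cardU n_def by simp
qed

theorem proposition4p2:
  fixes lam :: "box set" and m :: nat
  assumes "skew_diagram lam" and "lam \<noteq> {}" and "m \<ge> 1"
  shows "card (T_D lam m True) = 2 ^ (card lam - 1) * f_shape lam \<and>
         card (T_D lam m False) = 2 ^ (card lam - 1) * f_shape lam"
  using main_count[OF assms] by simp

end
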